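(* In the changepoint model with negative-binomial segment lengths described in the context (with success probability $q_{old}$), for $0<j\le n$ and every $q\in(0,1)$, $$\sum_{i=n-j}^\infty P(S=i,C_n=j\mid Y_{1:n}=y_{1:n})\big(r\ln q+i\ln(1-q)\big)=\tilde c_{jn}\,r\ln q+\tilde c_{jn}\,\frac{\sum_{\ell=n-j}^\infty\ell\,\mathrm{NB}(\ell;q_{old},r)}{\sum_{\ell=n-j}^\infty\mathrm{NB}(\ell;q_{old},r)}\,\ln(1-q).$$
   Context: Let $\mathrm{NB}(\ell;q,r)=\binom{r-1+\ell}{\ell}q^r(1-q)^\ell$ ($\ell=0,1,2,\dots$) be the negative binomial probability mass function with success probability $q\in(0,1)$ and number of successes $r\in\mathbb N_{\ge1}$. Model (with $q_{old}\in(0,1)$): fix $n\ge1$ and data $y_1,\dots,y_n$; $(\mathbb X,\mathcal X)$, $(\mathbb Y,\mathcal Y)$ standard Borel, $\psi$ $\sigma$-finite on $\mathbb Y$, $\mathcal J$ a probability measure on $\mathbb X$. Let $q_{0i}\in[0,1]$ ($i\ge1$) be arbitrary and for $0<j<i$ let $q_{ji}=\sum_{\ell\ge i-j}\mathrm{NB}(\ell;q_{old},r)/\sum_{\ell\ge i-j-1}\mathrm{NB}(\ell;q_{old},r)$. The changepoint process $(C_i)_{i\ge1}$, $C_i\in\{0,\dots,i\}$, is a Markov chain with $P(C_1=0)=q_{01}$, $P(C_1=1)=1-q_{01}$, and for $i\ge2$: $P(C_i=j\mid C_{i-1}=j)=q_{ji}$, $P(C_i=i\mid C_{i-1}=j)=1-q_{ji}$;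 it is defined for all $i\ge1$. For $i=1,\dots,n$: $X_1\sim\mathcal J$; for $i\ge2$, $X_i\sim\mathcal J$ (fresh) if $C_i=i$ and $X_i=X_{i-1}$ if $C_i<i$; $Y_i$ depends on all other variables only through $X_i$ with density $p(Y_i=y\mid X_i=x)$ w.r.t. $\psi$; given $C_n$, the future chain $(C_k)_{k>n}$ is independent of $X_{1:n},Y_{1:n},C_{1:n-1}$. Assume $\int\prod_{\ell=j}^ip(Y_\ell=y_\ell\mid X_\ell=x)\mathcal J(dx)>0$ for $0<j\le i\le n$. Let $\tau=\min\{k>n:C_k=k\}$ and $S=\tau-1-C_n$. Let $\tilde c_{jn}=P(C_n=j\mid Y_{1:n}=y_{1:n})$. *)

theory Defs
  imports "HOL-Probability.Probability"
begin

definition NB :: "real \<Rightarrow> nat \<Rightarrow> nat \<Rightarrow> real" where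
  "NB q r l = real ((r - 1 + l) choose l) * q ^ r * (1 - q) ^ l"

definition nb_tail :: "real \<Rightarrow> nat \<Rightarrow> nat \<Rightarrow> real" where
  "nb_tail q r m = (\<Sum>l. NB q r (l + m))"

definition qstay :: "(nat \<Rightarrow> real) \<Rightarrow> real \<Rightarrow> nat \<Rightarrow> nat \<Rightarrow> nat \<Rightarrow> real" where
  "qstay q0 qo r j i =
     (if j = 0 then q0 i else nb_tail qo r (i - j) / nb_tail qo r (i - j - 1))"

definition init_prob :: "(nat \<Rightarrow> real) \<Rightarrow> nat \<Rightarrow> real" where
  "init_prob q0 b = (if b = 0 then q0 1 else if b = 1 then 1 - q0 1 else 0)"

text \<open>P(C_i = b | C_{i-1} = a), for i >= 2.\<close>
definition step_prob :: "(nat \<Rightarrow> real) \<Rightarrow> real \<Rightarrow> nat \<Rightarrow> nat \<Rightarrow> nat \<Rightarrow> nat \<Rightarrow> real" where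
  "step_prob q0 qo r i a b =
     (if b = a then qstay q0 qo r a i else if b = i then 1 - qstay q0 qo r a i else 0)"

definition cpaths :: "nat \<Rightarrow> (nat \<Rightarrow> nat) set" where
  "cpaths m = {c \<in> {1..m} \<rightarrow>\<^sub>E {0..m}. \<forall>k\<in>{1..m}. c k \<le> k}"

definition path_prob :: "(nat \<Rightarrow> real) \<Rightarrow> real \<Rightarrow> nat \<Rightarrow> nat \<Rightarrow> (nat \<Rightarrow> nat) \<Rightarrow> real" where
  "path_prob q0 qo r m c =
     (if m = 0 then 1
      else init_prob q0 (c 1) * (\<Prod>i\<in>{2..m}. step_prob q0 qo r i (c (i - 1)) (c i)))"

text \<open>blk c i = the index a <= i at which the latent X_i was freshly drawn
  (X_1 is fresh; X_i is fresh iff C_i = i; otherwise X_i = X_{i-1}).\<close>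
fun blk :: "(nat \<Rightarrow> nat) \<Rightarrow> nat \<Rightarrow> nat" where
  "blk c 0 = 0"
| "blk c (Suc i) = (if i = 0 then 1 else if c (Suc i) = Suc i then Suc i else blk c i)"

text \<open>Density of Y_{1:n} = y_{1:n} (w.r.t. psi^n) given C_{1:n} = c:
  product over fresh draws a of  integral prod_{l in block a} p(y_l | x) J(dx).\<close>
definition lik :: "'x measure \<Rightarrow> ('y \<Rightarrow> 'x \<Rightarrow> real) \<Rightarrow> (nat \<Rightarrow> 'y) \<Rightarrow> nat \<Rightarrow> (nat \<Rightarrow> nat) \<Rightarrow> real" where
  "lik J p y n c =
     (\<Prod>a\<in>{a\<in>{1..n}. blk c a = a}.
        integral\<^sup>L J (\<lambda>x. \<Prod>l\<in>{l\<in>{1..n}. blk c l = a}. p (y l) x))"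

definition evidence :: "(nat \<Rightarrow> real) \<Rightarrow> real \<Rightarrow> nat \<Rightarrow> 'x measure \<Rightarrow> ('y \<Rightarrow> 'x \<Rightarrow> real)
    \<Rightarrow> (nat \<Rightarrow> 'y) \<Rightarrow> nat \<Rightarrow> real" where
  "evidence q0 qo r J p y n = (\<Sum>c\<in>cpaths n. path_prob q0 qo r n c * lik J p y n c)"

text \<open>c~_{jn} = P(C_n = j | Y_{1:n} = y_{1:n}) (Bayes' rule with densities).\<close>
definition post_C :: "(nat \<Rightarrow> real) \<Rightarrow> real \<Rightarrow> nat \<Rightarrow> 'x measure \<Rightarrow> ('y \<Rightarrow> 'x \<Rightarrow> real)
    \<Rightarrow> (nat \<Rightarrow> 'y) \<Rightarrow> nat \<Rightarrow> nat \<Rightarrow> real" where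
  "post_C q0 qo r J p y n j =
     (\<Sum>c\<in>{c\<in>cpaths n. c n = j}. path_prob q0 qo r n c * lik J p y n c)
     / evidence q0 qo r J p y n"

text \<open>P(S = i, C_n = j | Y_{1:n} = y_{1:n}), where tau = min{k > n. C_k = k} and
  S = tau - 1 - C_n.  The event {S = i, C_n = j} is {C_n = j, tau = i + j + 1};
  the future chain depends on the past only through C_n, so the joint density
  is obtained by summing over paths up to time i + j + 1.\<close>
definition post_SC :: "(nat \<Rightarrow> real) \<Rightarrow> real \<Rightarrow> nat \<Rightarrow> 'x measure \<Rightarrow> ('y \<Rightarrow> 'x \<Rightarrow> real)
    \<Rightarrow> (nat \<Rightarrow> 'y) \<Rightarrow> nat \<Rightarrow> nat \<Rightarrow> nat \<Rightarrow> real" where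
  "post_SC q0 qo r J p y n i j =
     (let t = i + j + 1 in
      if t \<le> n then 0 else
      (\<Sum>c\<in>{c\<in>cpaths t. c n = j \<and> c t = t \<and> (\<forall>k\<in>{n<..<t}. c k \<noteq> k)}.
          path_prob q0 qo r t c * lik J p y n c)
      / evidence q0 qo r J p y n)"

end

theory Submission imports Defs begin

lemma summable_choose:
  fixes x :: real assumes x: "0 \<le> x" "x < 1"
  shows "summable (\<lambda>l. real ((s + l) choose l) * x ^ l)"
proof -
  define c where "c = (1 + x) / 2"
  obtain N :: nat where N: "2 * real s / (1 - x) < real N" using reals_Archimedean2 by blast
  show ?thesis
  proof (rule summable_ratio_test[of c N])
    show "c < 1" using x by (simp add: c_def)
    fix l assume l: "N \<le> l"
    have e: "real (Suc (s + l)) * real ((s + l) choose l) = real ((s + Suc l) choose Suc l) * real (Suc l)"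
      using Suc_times_binomial_eq[of "s + l" l] by (metis of_nat_mult add_Suc_right)
    have "2 * real s / (1 - x) < real l" using N l by linarith
    hence "2 * real s < real l * (1 - x)" using x by (simp add: field_simps)
    hence h2: "2 * real s < real l - real l * x" by (simp add: algebra_simps)
    have h3: "real s * x \<le> real s" using x by (simp add: mult_left_le)
    have h4: "real (Suc (s + l)) * x = real s * x + real l * x + x" by (simp add: algebra_simps)
    have h5: "c * real (Suc l) = (real l + 1 + x * real l + x) / 2" by (simp add: c_def algebra_simps add_divide_distrib)
    have ineq: "real (Suc (s + l)) * x \<le> c * real (Suc l)"
      unfolding h4 h5 using h2 h3 x by (simp add: field_simps)
    have "norm (real ((s + Suc l) choose Suc l) * x ^ Suc l)
        = real ((s + Suc l) choose Suc l) * x ^ l * x" using x by simp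
    also have "\<dots> = real (Suc (s + l)) * real ((s + l) choose l) / real (Suc l) * x ^ l * x"
      using e by (simp add: field_simps)
    also have "\<dots> = (real (Suc (s + l)) * x) * (real ((s + l) choose l) * x ^ l) / real (Suc l)"
      by (simp add: field_simps)
    also have "\<dots> \<le> (c * real (Suc l)) * (real ((s + l) choose l) * x ^ l) / real (Suc l)"
      using ineq x by (intro divide_right_mono mult_right_mono) auto
    also have "\<dots> = c * norm (real ((s + l) choose l) * x ^ l)" using x by simp
    finally show "norm (real ((s + Suc l) choose Suc l) * x ^ Suc l) \<le> c * norm (real ((s + l) choose l) * x ^ l)" .
  qed
qed

lemma NB_pos: "0 < qo \<Longrightarrow> qo < 1 \<Longrightarrow> 0 < NB qo r l"
  unfolding NB_def by (simp add: zero_less_binomial_iff)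

lemma summable_NB: assumes "0 < qo" "qo < 1" "r \<ge> 1" shows "summable (NB qo r)"
proof -
  have "summable (\<lambda>l. real ((r - 1 + l) choose l) * (1 - qo) ^ l * qo ^ r)"
    using summable_choose[of "1 - qo" "r - 1"] assms by (intro summable_mult2) auto
  thus ?thesis unfolding NB_def by (simp add: algebra_simps)
qed

lemma summable_lNB: assumes "0 < qo" "qo < 1" "r \<ge> 1" shows "summable (\<lambda>l. real l * NB qo r l)"
proof (rule summable_comparison_test')
  show "summable (\<lambda>l. real r * NB qo (Suc r) l * (1 / qo))" using summable_NB[of qo "Suc r"] assms
    by (intro summable_mult2[where c="1/qo"] summable_mult[where c="real r"]) auto
  fix l :: nat
  have k: "r * ((r + l) choose r) = (r + l) * ((r - 1 + l) choose (r - 1))"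
    using times_binomial_minus1_eq[of r "r + l"] assms by (simp add: algebra_simps)
  have s1: "(r + l) choose r = (r + l) choose l" using binomial_symmetric[of l "r + l"] by simp
  have s2: "(r - 1 + l) choose (r - 1) = (r - 1 + l) choose l" using binomial_symmetric[of l "r - 1 + l"] by simp
  have "real l * real ((r - 1 + l) choose l) \<le> real r * real ((r + l) choose l)"
  proof -
    have "l * ((r - 1 + l) choose l) \<le> r * ((r + l) choose l)" using k s1 s2 by (metis le_add2 mult_le_mono1)
    thus ?thesis by (metis of_nat_le_iff of_nat_mult)
  qed
  hence "real l * real ((r - 1 + l) choose l) * (qo ^ r * (1 - qo) ^ l) \<le> real r * real ((r + l) choose l) * (qo ^ r * (1 - qo) ^ l)"
    using assms by (intro mult_right_mono) auto
  hence "real l * NB qo r l \<le> real r * NB qo (Suc r) l * (1 / qo)"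
    using assms unfolding NB_def by (simp add: field_simps)
  thus "norm (real l * NB qo r l) \<le> real r * NB qo (Suc r) l * (1 / qo)"
    using NB_pos[of qo r l] assms by simp
qed


lemma cpaths_finite: "finite (cpaths m)"
proof -
  have "cpaths m \<subseteq> {1..m} \<rightarrow>\<^sub>E {0..m}" unfolding cpaths_def by auto
  thus ?thesis by (rule finite_subset) (intro finite_PiE, auto)
qed

lemma cpaths_Suc_bij:
  "bij_betw (\<lambda>(c, b). c(Suc m := b)) (cpaths m \<times> {0..Suc m}) (cpaths (Suc m))"
proof (rule bij_betw_byWitness[where f' = "\<lambda>d. (restrict d {1..m}, d (Suc m))"])
  show "\<forall>a\<in>cpaths m \<times> {0..Suc m}. (\<lambda>d. (restrict d {1..m}, d (Suc m))) ((\<lambda>(c, b). c(Suc m := b)) a) = a"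
  proof
    fix a assume a: "a \<in> cpaths m \<times> {0..Suc m}"
    obtain c b where cb: "a = (c, b)" by (cases a)
    have ce: "c \<in> extensional {1..m}" using a cb unfolding cpaths_def by (auto simp: PiE_iff)
    have "restrict (c(Suc m := b)) {1..m} = c"
    proof
      fix x show "restrict (c(Suc m := b)) {1..m} x = c x"
        using ce by (cases "x \<in> {1..m}") (auto simp: extensional_def)
    qed
    thus "(\<lambda>d. (restrict d {1..m}, d (Suc m))) ((\<lambda>(c, b). c(Suc m := b)) a) = a" using cb by simp
  qed
  show "\<forall>a'\<in>cpaths (Suc m). (\<lambda>(c, b). c(Suc m := b)) ((\<lambda>d. (restrict d {1..m}, d (Suc m))) a') = a'"
  proof
    fix d assume d: "d \<in> cpaths (Suc m)"
    have de: "d \<in> extensional {1..Suc m}" using d unfolding cpaths_def by (auto simp: PiE_iff)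
    have "(restrict d {1..m})(Suc m := d (Suc m)) = d"
    proof
      fix x show "((restrict d {1..m})(Suc m := d (Suc m))) x = d x"
        using de by (cases "x \<in> {1..Suc m}") (auto simp: extensional_def)
    qed
    thus "(\<lambda>(c, b). c(Suc m := b)) ((\<lambda>d. (restrict d {1..m}, d (Suc m))) d) = d" by simp
  qed
  show "(\<lambda>(c, b). c(Suc m := b)) ` (cpaths m \<times> {0..Suc m}) \<subseteq> cpaths (Suc m)"
  proof
    fix e assume "e \<in> (\<lambda>(c, b). c(Suc m := b)) ` (cpaths m \<times> {0..Suc m})"
    then obtain c b where e: "e = c(Suc m := b)" and c: "c \<in> cpaths m" and b: "b \<le> Suc m" by auto
    have c1: "c \<in> extensional {1..m}" "\<And>k. k \<in> {1..m} \<Longrightarrow> c k \<le> k"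
      using c unfolding cpaths_def by (auto simp: PiE_iff)
    have "e \<in> {1..Suc m} \<rightarrow>\<^sub>E {0..Suc m}"
    proof (rule PiE_I)
      fix x assume "x \<in> {1..Suc m}" thus "e x \<in> {0..Suc m}" using c1 b e by (cases "x = Suc m") force+
    next
      fix x assume "x \<notin> {1..Suc m}" thus "e x = undefined" using c1 e by (auto simp: extensional_def)
    qed
    moreover have "\<forall>k\<in>{1..Suc m}. e k \<le> k" using c1 b e by auto
    ultimately show "e \<in> cpaths (Suc m)" unfolding cpaths_def by simp
  qed
  show "(\<lambda>d. (restrict d {1..m}, d (Suc m))) ` cpaths (Suc m) \<subseteq> cpaths m \<times> {0..Suc m}"
  proof
    fix e assume "e \<in> (\<lambda>d. (restrict d {1..m}, d (Suc m))) ` cpaths (Suc m)"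
    then obtain d where e: "e = (restrict d {1..m}, d (Suc m))" and d: "d \<in> cpaths (Suc m)" by auto
    have d1: "\<And>k. k \<in> {1..Suc m} \<Longrightarrow> d k \<le> k"
      using d unfolding cpaths_def by (auto simp: PiE_iff)
    have "restrict d {1..m} \<in> {1..m} \<rightarrow>\<^sub>E {0..m}"
      using d1 by (auto intro!: PiE_I) (meson atLeastAtMost_iff le_SucI order_trans)
    moreover have "\<forall>k\<in>{1..m}. restrict d {1..m} k \<le> k" using d1 by auto
    moreover have "d (Suc m) \<le> Suc m" using d1 by auto
    ultimately show "e \<in> cpaths m \<times> {0..Suc m}" unfolding cpaths_def e by simp
  qed
qed

lemma sum_cpaths_Suc:
  "(\<Sum>c\<in>cpaths (Suc m). F c) = (\<Sum>c\<in>cpaths m. \<Sum>b\<in>{0..Suc m}. F (c(Suc m := b)))"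
proof -
  have "(\<Sum>c\<in>cpaths (Suc m). F c) = (\<Sum>x\<in>cpaths m \<times> {0..Suc m}. F ((\<lambda>(c, b). c(Suc m := b)) x))"
    using sum.reindex_bij_betw[OF cpaths_Suc_bij[of m], of F] by simp
  also have "\<dots> = (\<Sum>c\<in>cpaths m. \<Sum>b\<in>{0..Suc m}. F (c(Suc m := b)))"
    by (subst sum.cartesian_product) (simp add: case_prod_beta)
  finally show ?thesis .
qed

lemma path_prob_upd:
  assumes "m \<ge> 1"
  shows "path_prob q0 qo r (Suc m) (c(Suc m := b)) = path_prob q0 qo r m c * step_prob q0 qo r (Suc m) (c m) b"
proof -
  have e: "{2..Suc m} = insert (Suc m) {2..m}" using assms by auto
  have p: "(\<Prod>i\<in>{2..m}. step_prob q0 qo r i ((c(Suc m := b)) (i - 1)) ((c(Suc m := b)) i))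
        = (\<Prod>i\<in>{2..m}. step_prob q0 qo r i (c (i - 1)) (c i))"
    by (rule prod.cong) auto
  show ?thesis using assms unfolding path_prob_def e
    by (simp add: p[simplified])
qed

lemma blk_cong: "(\<And>i. 1 \<le> i \<Longrightarrow> i \<le> a \<Longrightarrow> c i = c' i) \<Longrightarrow> blk c a = blk c' a"
  by (induction a) auto

lemma lik_cong:
  assumes "\<And>i. 1 \<le> i \<Longrightarrow> i \<le> n \<Longrightarrow> c i = c' i"
  shows "lik J p y n c = lik J p y n c'"
proof -
  have b: "\<And>a. a \<in> {1..n} \<Longrightarrow> blk c a = blk c' a" using assms by (intro blk_cong) auto
  have s1: "{a\<in>{1..n}. blk c a = a} = {a\<in>{1..n}. blk c' a = a}" using b by auto
  have s2: "\<And>a. {l\<in>{1..n}. blk c l = a} = {l\<in>{1..n}. blk c' l = a}" using b by auto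
  show ?thesis unfolding lik_def s1 s2 ..
qed

lemma path_prob_step:
  assumes "path_prob q0 qo r t c \<noteq> 0" "2 \<le> k" "k \<le> t"
  shows "c k = c (k - 1) \<or> c k = k"
proof -
  have "(\<Prod>i\<in>{2..t}. step_prob q0 qo r i (c (i - 1)) (c i)) \<noteq> 0"
    using assms unfolding path_prob_def by (auto split: if_splits)
  hence "step_prob q0 qo r k (c (k - 1)) (c k) \<noteq> 0" using assms(2,3) by auto
  thus ?thesis unfolding step_prob_def by (auto split: if_splits)
qed

lemma path_stay:
  assumes "path_prob q0 qo r t c \<noteq> 0" "c n = j" "j \<le> n" "n \<ge> 1"
    and nk: "\<forall>k\<in>{n<..t}. c k \<noteq> k"
  shows "\<forall>k\<in>{n<..t}. c k = j"
proof -
  have "\<forall>d. n + d \<le> t \<longrightarrow> c (n + d) = j"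
  proof
    fix d show "n + d \<le> t \<longrightarrow> c (n + d) = j"
    proof (induction d)
      case 0 thus ?case using assms by simp
    next
      case (Suc d)
      show ?case
      proof
        assume h: "n + Suc d \<le> t"
        have "c (n + Suc d) = c (n + Suc d - 1) \<or> c (n + Suc d) = n + Suc d"
          using path_prob_step[OF assms(1), of "n + Suc d"] h assms(4) by simp
        moreover have "c (n + Suc d) \<noteq> n + Suc d" using nk h by auto
        ultimately show "c (n + Suc d) = j" using Suc h by simp
      qed
    qed
  qed
  thus ?thesis by (metis greaterThanAtMost_iff le_add_diff_inverse less_imp_le)
qed


definition Gs where
  "Gs q0 qo r J p y n j t = (\<Sum>c\<in>cpaths t. if c n = j \<and> (\<forall>k\<in>{n<..t}. c k = j)
      then path_prob q0 qo r t c * lik J p y n c else 0)"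

lemma G_step:
  assumes "n \<le> t" "1 \<le> n" "j \<le> n"
  shows "Gs q0 qo r J p y n j (Suc t) = Gs q0 qo r J p y n j t * qstay q0 qo r j (Suc t)"
proof -
  define X where "X c = (if c n = j \<and> (\<forall>k\<in>{n<..t}. c k = j)
      then path_prob q0 qo r t c * lik J p y n c else 0)" for c
  have inner: "(if (c(Suc t := b)) n = j \<and> (\<forall>k\<in>{n<..Suc t}. (c(Suc t := b)) k = j)
      then path_prob q0 qo r (Suc t) (c(Suc t := b)) * lik J p y n (c(Suc t := b)) else 0)
      = (if b = j then X c * qstay q0 qo r j (Suc t) else 0)" for c b
  proof -
    have cn: "(c(Suc t := b)) n = c n" using assms by simp
    have lk: "lik J p y n (c(Suc t := b)) = lik J p y n c" by (rule lik_cong) (use assms in auto)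
    have pp: "path_prob q0 qo r (Suc t) (c(Suc t := b)) = path_prob q0 qo r t c * step_prob q0 qo r (Suc t) (c t) b"
      using assms by (intro path_prob_upd) auto
    have iv: "{n<..Suc t} = insert (Suc t) {n<..t}" using assms by auto
    have cond: "(\<forall>k\<in>{n<..Suc t}. (c(Suc t := b)) k = j) \<longleftrightarrow> (\<forall>k\<in>{n<..t}. c k = j) \<and> b = j"
      unfolding iv by auto
    show ?thesis
    proof (cases "c n = j \<and> (\<forall>k\<in>{n<..t}. c k = j) \<and> b = j")
      case True
      have ct: "c t = j" using True assms by (cases "t = n") auto
      have "step_prob q0 qo r (Suc t) (c t) b = qstay q0 qo r j (Suc t)"
        using True ct unfolding step_prob_def by simp
      thus ?thesis using True cn lk pp cond unfolding X_def by simp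
    next
      case False
      thus ?thesis using cn cond unfolding X_def by auto
    qed
  qed
  have "Gs q0 qo r J p y n j (Suc t) = (\<Sum>c\<in>cpaths t. \<Sum>b\<in>{0..Suc t}.
      (if b = j then X c * qstay q0 qo r j (Suc t) else 0))"
    unfolding Gs_def sum_cpaths_Suc inner ..
  also have "\<dots> = (\<Sum>c\<in>cpaths t. X c * qstay q0 qo r j (Suc t))"
    using assms by (intro sum.cong) auto
  also have "\<dots> = Gs q0 qo r J p y n j t * qstay q0 qo r j (Suc t)"
    unfolding Gs_def X_def by (simp add: sum_distrib_right)
  finally show ?thesis .
qed

lemma H_step:
  assumes "n \<le> t" "1 \<le> n" "j \<le> n"
  shows "(\<Sum>c\<in>cpaths (Suc t). if c n = j \<and> c (Suc t) = Suc t \<and> (\<forall>k\<in>{n<..<Suc t}. c k \<noteq> k)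
      then path_prob q0 qo r (Suc t) c * lik J p y n c else 0)
    = Gs q0 qo r J p y n j t * (1 - qstay q0 qo r j (Suc t))"
proof -
  define Y where "Y c = (if c n = j \<and> (\<forall>k\<in>{n<..t}. c k \<noteq> k)
      then path_prob q0 qo r t c * step_prob q0 qo r (Suc t) (c t) (Suc t) * lik J p y n c else 0)" for c
  have inner: "(if (c(Suc t := b)) n = j \<and> (c(Suc t := b)) (Suc t) = Suc t \<and> (\<forall>k\<in>{n<..<Suc t}. (c(Suc t := b)) k \<noteq> k)
      then path_prob q0 qo r (Suc t) (c(Suc t := b)) * lik J p y n (c(Suc t := b)) else 0)
      = (if b = Suc t then Y c else 0)" for c b
  proof -
    have cn: "(c(Suc t := b)) n = c n" using assms by simp
    have lk: "lik J p y n (c(Suc t := b)) = lik J p y n c" by (rule lik_cong) (use assms in auto)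
    have pp: "path_prob q0 qo r (Suc t) (c(Suc t := b)) = path_prob q0 qo r t c * step_prob q0 qo r (Suc t) (c t) b"
      using assms by (intro path_prob_upd) auto
    have iv: "{n<..<Suc t} = {n<..t}" by auto
    have cond: "(\<forall>k\<in>{n<..<Suc t}. (c(Suc t := b)) k \<noteq> k) \<longleftrightarrow> (\<forall>k\<in>{n<..t}. c k \<noteq> k)"
      unfolding iv by auto
    show ?thesis using cn lk pp cond unfolding Y_def by auto
  qed
  have Yeq: "Y c = (if c n = j \<and> (\<forall>k\<in>{n<..t}. c k = j)
      then path_prob q0 qo r t c * lik J p y n c else 0) * (1 - qstay q0 qo r j (Suc t))" for c
  proof (cases "path_prob q0 qo r t c = 0")
    case True thus ?thesis unfolding Y_def by simp
  next
    case pnz: False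
    show ?thesis
    proof (cases "c n = j \<and> (\<forall>k\<in>{n<..t}. c k \<noteq> k)")
      case True
      have st: "\<forall>k\<in>{n<..t}. c k = j" using path_stay[OF pnz, of n j] True assms by auto
      have ct: "c t = j" using True st assms by (cases "t = n") auto
      have "step_prob q0 qo r (Suc t) (c t) (Suc t) = 1 - qstay q0 qo r j (Suc t)"
        using ct assms unfolding step_prob_def by simp
      thus ?thesis using True st unfolding Y_def by simp
    next
      case False
      have nc: "\<not> (c n = j \<and> (\<forall>k\<in>{n<..t}. c k = j))"
      proof
        assume h: "c n = j \<and> (\<forall>k\<in>{n<..t}. c k = j)"
        then obtain k where "k \<in> {n<..t}" "c k = k" using False by auto
        thus False using h assms by fastforce
      qed
      have y0: "Y c = 0" unfolding Y_def by (rule if_not_P[OF False])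
      show ?thesis by (simp only: y0 if_not_P[OF nc] mult_zero_left)
    qed
  qed
  have "(\<Sum>c\<in>cpaths (Suc t). if c n = j \<and> c (Suc t) = Suc t \<and> (\<forall>k\<in>{n<..<Suc t}. c k \<noteq> k)
      then path_prob q0 qo r (Suc t) c * lik J p y n c else 0)
     = (\<Sum>c\<in>cpaths t. \<Sum>b\<in>{0..Suc t}. (if b = Suc t then Y c else 0))"
    unfolding sum_cpaths_Suc inner ..
  also have "\<dots> = (\<Sum>c\<in>cpaths t. Y c)" by simp
  also have "\<dots> = Gs q0 qo r J p y n j t * (1 - qstay q0 qo r j (Suc t))"
    unfolding Gs_def Yeq by (simp add: sum_distrib_right)
  finally show ?thesis .
qed

lemma G_prod:
  assumes "1 \<le> n" "j \<le> n"
  shows "Gs q0 qo r J p y n j (n + k) = Gs q0 qo r J p y n j n * (\<Prod>i\<in>{n<..n+k}. qstay q0 qo r j i)"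
proof (induction k)
  case 0 thus ?case by simp
next
  case (Suc k)
  have iv: "{n<..n + Suc k} = insert (Suc (n + k)) {n<..n+k}" by auto
  show ?case using G_step[of n "n + k" j q0 qo r J p y] assms Suc unfolding iv by simp
qed

lemma G_n: "Gs q0 qo r J p y n j n = (\<Sum>c\<in>{c\<in>cpaths n. c n = j}. path_prob q0 qo r n c * lik J p y n c)"
  unfolding Gs_def by (simp add: sum.inter_filter[OF cpaths_finite])

lemma post_SC_eq:
  assumes "1 \<le> n" "j \<le> n"
  shows "post_SC q0 qo r J p y n (k + (n - j)) j
    = post_C q0 qo r J p y n j * ((\<Prod>i\<in>{n<..n+k}. qstay q0 qo r j i) * (1 - qstay q0 qo r j (Suc (n + k))))"
proof -
  have t: "k + (n - j) + j + 1 = Suc (n + k)" using assms by simp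
  have "post_SC q0 qo r J p y n (k + (n - j)) j =
     (\<Sum>c\<in>cpaths (Suc (n + k)). if c n = j \<and> c (Suc (n + k)) = Suc (n + k) \<and> (\<forall>k\<in>{n<..<Suc (n + k)}. c k \<noteq> k)
      then path_prob q0 qo r (Suc (n + k)) c * lik J p y n c else 0) / evidence q0 qo r J p y n"
    unfolding post_SC_def Let_def t by (simp add: sum.inter_filter[OF cpaths_finite])
  also have "\<dots> = Gs q0 qo r J p y n j (n + k) * (1 - qstay q0 qo r j (Suc (n + k))) / evidence q0 qo r J p y n"
    using H_step[of n "n + k" j q0 qo r J p y] assms by simp
  also have "\<dots> = post_C q0 qo r J p y n j * ((\<Prod>i\<in>{n<..n+k}. qstay q0 qo r j i) * (1 - qstay q0 qo r j (Suc (n + k))))"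
    unfolding G_prod[OF assms] post_C_def G_n by simp
  finally show ?thesis .
qed


lemma summable_NB_shift: "0 < qo \<Longrightarrow> qo < 1 \<Longrightarrow> r \<ge> 1 \<Longrightarrow> summable (\<lambda>l. NB qo r (l + s))"
  using summable_NB summable_iff_shift[of "NB qo r" s] by blast

lemma nb_tail_pos: "0 < qo \<Longrightarrow> qo < 1 \<Longrightarrow> r \<ge> 1 \<Longrightarrow> 0 < nb_tail qo r s"
  unfolding nb_tail_def by (intro suminf_pos summable_NB_shift NB_pos) auto

lemma nb_tail_split: assumes "0 < qo" "qo < 1" "r \<ge> 1"
  shows "nb_tail qo r s = NB qo r s + nb_tail qo r (Suc s)"
  using suminf_split_head[OF summable_NB_shift[OF assms, of s]] unfolding nb_tail_def by simp

lemma tele: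
  assumes "0 < qo" "qo < 1" "r \<ge> 1" "0 < j" "j \<le> n"
  shows "(\<Prod>i\<in>{n<..n+k}. qstay q0 qo r j i) = nb_tail qo r (n - j + k) / nb_tail qo r (n - j)"
proof (induction k)
  case 0 thus ?case using nb_tail_pos[OF assms(1-3), of "n - j"] by simp
next
  case (Suc k)
  have iv: "{n<..n + Suc k} = insert (Suc (n + k)) {n<..n+k}" by auto
  have q: "qstay q0 qo r j (Suc (n + k)) = nb_tail qo r (Suc (n - j + k)) / nb_tail qo r (n - j + k)"
    unfolding qstay_def using assms by (simp add: Suc_diff_le)
  have "(\<Prod>i\<in>{n<..n + Suc k}. qstay q0 qo r j i)
      = qstay q0 qo r j (Suc (n + k)) * (\<Prod>i\<in>{n<..n+k}. qstay q0 qo r j i)" unfolding iv by simp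
  also have "\<dots> = nb_tail qo r (Suc (n - j + k)) / nb_tail qo r (n - j)"
    unfolding q Suc.IH using nb_tail_pos[OF assms(1-3), of "n - j + k"] by simp
  finally show ?case by simp
qed

lemma weight:
  assumes "0 < qo" "qo < 1" "r \<ge> 1" "0 < j" "j \<le> n"
  shows "(\<Prod>i\<in>{n<..n+k}. qstay q0 qo r j i) * (1 - qstay q0 qo r j (Suc (n + k)))
       = NB qo r (k + (n - j)) / nb_tail qo r (n - j)"
proof -
  have q: "qstay q0 qo r j (Suc (n + k)) = nb_tail qo r (Suc (n - j + k)) / nb_tail qo r (n - j + k)"
    unfolding qstay_def using assms by (simp add: Suc_diff_le)
  have p: "0 < nb_tail qo r (n - j + k)" using nb_tail_pos[OF assms(1-3)] by blast
  have sp: "nb_tail qo r (n - j + k) = NB qo r (n - j + k) + nb_tail qo r (Suc (n - j + k))"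
    by (rule nb_tail_split[OF assms(1-3)])
  have "1 - qstay q0 qo r j (Suc (n + k)) = NB qo r (n - j + k) / nb_tail qo r (n - j + k)"
    unfolding q using p sp by (simp add: field_simps)
  thus ?thesis unfolding tele[OF assms] using p by (simp add: add.commute)
qed


theorem mainTheorem15:
  fixes qold :: real and r n j :: nat and q0 :: "nat \<Rightarrow> real"
    and J :: "'x measure" and \<psi> :: "'y measure" and p :: "'y \<Rightarrow> 'x \<Rightarrow> real"
    and y :: "nat \<Rightarrow> 'y" and q :: real
  assumes qold: "0 < qold" "qold < 1"
    and r: "r \<ge> 1"
    and n: "n \<ge> 1"
    and q0: "\<And>i. i \<ge> 1 \<Longrightarrow> 0 \<le> q0 i \<and> q0 i \<le> 1"
    and J: "prob_space J"
    and psi: "sigma_finite_measure \<psi>"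
    and p_meas: "(\<lambda>(u, x). p u x) \<in> borel_measurable (\<psi> \<Otimes>\<^sub>M J)"
    and p_nonneg: "\<And>u x. 0 \<le> p u x"
    and p_dens: "\<And>x. x \<in> space J \<Longrightarrow> (\<integral>\<^sup>+ u. ennreal (p u x) \<partial>\<psi>) = 1"
    and y: "\<And>l. l \<in> {1..n} \<Longrightarrow> y l \<in> space \<psi>"
    and pos: "\<And>a b. 0 < a \<Longrightarrow> a \<le> b \<Longrightarrow> b \<le> n \<Longrightarrow>
                 integral\<^sup>L J (\<lambda>x. \<Prod>l\<in>{a..b}. p (y l) x) > 0"
    and j: "0 < j" "j \<le> n"
    and q: "0 < q" "q < 1"
  shows "(\<lambda>k. post_SC q0 qold r J p y n (k + (n - j)) j
               * (real r * ln q + real (k + (n - j)) * ln (1 - q)))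
         sums (post_C q0 qold r J p y n j * real r * ln q
               + post_C q0 qold r J p y n j
                 * ((\<Sum>l. real (l + (n - j)) * NB qold r (l + (n - j))) / nb_tail qold r (n - j))
                 * ln (1 - q))"
proof -
  define m where "m = n - j"
  define A where "A = post_C q0 qold r J p y n j"
  define T where "T = nb_tail qold r m"
  define L where "L = (\<Sum>l. real (l + m) * NB qold r (l + m))"
  have Tpos: "0 < T" unfolding T_def using nb_tail_pos[OF qold r] by blast
  have S1: "(\<lambda>k. NB qold r (k + m)) sums T"
    unfolding T_def nb_tail_def using summable_NB_shift[OF qold r] by (rule summable_sums)
  have sl: "summable (\<lambda>k. real (k + m) * NB qold r (k + m))"
    using summable_lNB[OF qold r] summable_iff_shift[of "\<lambda>l. real l * NB qold r l" m] by blast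
  have S2: "(\<lambda>k. real (k + m) * NB qold r (k + m)) sums L"
    unfolding L_def using sl by (rule summable_sums)
  have S: "(\<lambda>k. (A / T * (real r * ln q)) * NB qold r (k + m) + (A / T * ln (1 - q)) * (real (k + m) * NB qold r (k + m)))
      sums ((A / T * (real r * ln q)) * T + (A / T * ln (1 - q)) * L)"
    by (intro sums_add sums_mult S1 S2)
  have eq: "post_SC q0 qold r J p y n (k + m) j * (real r * ln q + real (k + m) * ln (1 - q))
      = (A / T * (real r * ln q)) * NB qold r (k + m) + (A / T * ln (1 - q)) * (real (k + m) * NB qold r (k + m))" for k
  proof -
    have "post_SC q0 qold r J p y n (k + m) j = A * (NB qold r (k + m) / T)"
      unfolding m_def A_def T_def post_SC_eq[OF n j(2)] weight[OF qold r j] ..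
    thus ?thesis by (simp add: divide_inverse algebra_simps)
  qed
  have rhs: "(A / T * (real r * ln q)) * T + (A / T * ln (1 - q)) * L = A * real r * ln q + A * (L / T) * ln (1 - q)"
    using Tpos by (simp add: field_simps)
  have fe: "(\<lambda>k. post_SC q0 qold r J p y n (k + m) j * (real r * ln q + real (k + m) * ln (1 - q)))
      = (\<lambda>k. (A / T * (real r * ln q)) * NB qold r (k + m) + (A / T * ln (1 - q)) * (real (k + m) * NB qold r (k + m)))"
    by (rule ext) (rule eq)
  have "(\<lambda>k. post_SC q0 qold r J p y n (k + m) j * (real r * ln q + real (k + m) * ln (1 - q)))
      sums (A * real r * ln q + A * (L / T) * ln (1 - q))"
    using S unfolding fe rhs .
  thus ?thesis unfolding m_def A_def T_def L_def .
qed

end
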